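(* Let $G$ be a connected graph with $n$ vertices and $m$ edges, and let $r$ be a vertex of $G$. Consider assignments $s$ that map each vertex $v\neq r$ to a neighbour $s(v)$ of $v$, viewed as the directed subgraph with arcs $v\to s(v)$, $v\ne r$. Let $Z_{\mathrm{tree},0}$ be the number of such assignments whose directed subgraph is a (spanning) tree directed towards the root $r$ (equivalently, contains no directed cycle), and let $Z_{\mathrm{tree},1}$ be the number of such assignments whose directed subgraph contains exactly one directed cycle. Then $\frac{Z_{\mathrm{tree},1}}{Z_{\mathrm{tree},0}}\le mn$. *)

theory Defs
  imports Complex_Main "HOL-Library.FuncSet"
begin

definition simple_graph :: "'a set \<Rightarrow> ('a \<Rightarrow> 'a \<Rightarrow> bool) \<Rightarrow> bool" where
  "simple_graph V E \<longleftrightarrow> finite V \<and> (\<forall>u v. E u v \<longrightarrow> u \<in> V \<and> v \<in> V)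
     \<and> (\<forall>u v. E u v \<longrightarrow> E v u) \<and> (\<forall>u. \<not> E u u)"

definition connected_graph :: "'a set \<Rightarrow> ('a \<Rightarrow> 'a \<Rightarrow> bool) \<Rightarrow> bool" where
  "connected_graph V E \<longleftrightarrow> V \<noteq> {} \<and> (\<forall>u\<in>V. \<forall>v\<in>V. E\<^sup>*\<^sup>* u v)"

definition num_edges :: "'a set \<Rightarrow> ('a \<Rightarrow> 'a \<Rightarrow> bool) \<Rightarrow> nat" where
  "num_edges V E = card {{u, v} | u v. E u v}"

definition assignments :: "'a set \<Rightarrow> ('a \<Rightarrow> 'a \<Rightarrow> bool) \<Rightarrow> 'a \<Rightarrow> ('a \<Rightarrow> 'a) set" where
  "assignments V E r = (\<Pi>\<^sub>E v\<in>V - {r}. {u. E v u})"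

definition on_cycle :: "'a set \<Rightarrow> 'a \<Rightarrow> ('a \<Rightarrow> 'a) \<Rightarrow> 'a \<Rightarrow> bool" where
  "on_cycle V r s v \<longleftrightarrow> (\<exists>k>0. (s ^^ k) v = v \<and> (\<forall>i<k. (s ^^ i) v \<in> V - {r}))"

definition dir_cycles :: "'a set \<Rightarrow> 'a \<Rightarrow> ('a \<Rightarrow> 'a) \<Rightarrow> 'a set set" where
  "dir_cycles V r s = {{(s ^^ i) v | i. True} | v. on_cycle V r s v}"

definition Z_tree :: "'a set \<Rightarrow> ('a \<Rightarrow> 'a \<Rightarrow> bool) \<Rightarrow> 'a \<Rightarrow> nat \<Rightarrow> nat" where
  "Z_tree V E r j = card {s \<in> assignments V E r. card (dir_cycles V r s) = j}"

end

theory Submission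
  imports Defs
begin


definition NR :: "'a set \<Rightarrow> 'a \<Rightarrow> ('a \<Rightarrow> 'a) \<Rightarrow> 'a \<Rightarrow> bool" where
  "NR V r s v \<longleftrightarrow> (\<forall>i. (s ^^ i) v \<in> V - {r})"

definition RR :: "'a set \<Rightarrow> 'a \<Rightarrow> ('a \<Rightarrow> 'a) \<Rightarrow> 'a \<Rightarrow> bool" where
  "RR V r s v \<longleftrightarrow> (\<exists>j. (s ^^ j) v = r \<and> (\<forall>i<j. (s ^^ i) v \<in> V - {r}))"

lemma assign_E:
  assumes "s \<in> assignments V E r" "z \<in> V" "z \<noteq> r"
  shows "E z (s z)"
  using assms unfolding assignments_def by (auto dest: PiE_mem)

lemma assign_out:
  assumes "s \<in> assignments V E r" "z \<notin> V - {r}"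
  shows "s z = undefined"
  using assms unfolding assignments_def by (auto simp: PiE_def extensional_def)

lemma funpow_in_V:
  assumes "s \<in> assignments V E r" "simple_graph V E" "v \<in> V" "\<forall>i'<i. (s^^i') v \<noteq> r"
  shows "(s^^i) v \<in> V"
  using assms(4)
proof (induction i)
  case 0 then show ?case using assms(3) by simp
next
  case (Suc i)
  then have "(s^^i) v \<in> V" "(s^^i) v \<noteq> r" by auto
  then have "E ((s^^i) v) (s ((s^^i) v))" using assign_E[OF assms(1)] by blast
  then show ?case using assms(2) unfolding simple_graph_def by auto
qed

lemma periodic:
  assumes "(f^^k) v = v" "k>0" "\<forall>i<k. (f^^i) v \<in> A"
  shows "(f^^i) v \<in> A"
proof -
  have m: "(f^^(k*m)) v = v" for m
  proof (induction m)
    case 0 then show ?case by simp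
  next
    case (Suc m)
    have "(f^^(k*Suc m)) v = (f^^k) ((f^^(k*m)) v)"
      by (simp add: funpow_add)
    then show ?case using Suc assms(1) by simp
  qed
  have "i = i mod k + k*(i div k)" by simp
  then have "(f^^i) v = (f^^(i mod k)) ((f^^(k*(i div k))) v)"
    by (metis comp_apply funpow_add)
  also have "\<dots> = (f^^(i mod k)) v" using m by simp
  finally show ?thesis using assms(2,3) by simp
qed

lemma RR_not_cycle:
  assumes "RR V r t v" "on_cycle V r t v" shows False
proof -
  obtain k where k: "k>0" "(t^^k) v = v" "\<forall>i<k. (t^^i) v \<in> V - {r}"
    using assms(2) unfolding on_cycle_def by blast
  obtain j where "(t^^j) v = r" using assms(1) unfolding RR_def by blast
  moreover have "(t^^j) v \<in> V - {r}" using periodic[OF k(2,1) k(3)] .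
  ultimately show False by simp
qed

lemma dichotomy:
  assumes "s \<in> assignments V E r" "simple_graph V E" "v \<in> V"
  shows "NR V r s v \<or> RR V r s v"
proof (cases "NR V r s v")
  case True then show ?thesis by blast
next
  case False
  then have "\<exists>i. (s^^i) v \<notin> V - {r}" unfolding NR_def by blast
  then obtain i where i: "(s^^i) v \<notin> V - {r}" "\<forall>i'<i. (s^^i') v \<in> V - {r}"
    using exists_least_iff[of "\<lambda>i. (s^^i) v \<notin> V - {r}"] by blast
  then have "(s^^i) v \<in> V" using funpow_in_V[OF assms] by blast
  then show ?thesis using i unfolding RR_def by blast
qed

lemma pigeon_cycle:
  assumes "simple_graph V E" "NR V r s v"
  shows "\<exists>a. on_cycle V r s ((s^^a) v)"
proof -
  have fin: "finite V" using assms(1) unfolding simple_graph_def by blast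
  let ?f = "\<lambda>i. (s^^i) v"
  have "?f ` {..card V} \<subseteq> V" using assms(2) unfolding NR_def by blast
  then have "\<not> inj_on ?f {..card V}"
    using card_inj_on_le[OF _ _ fin, of ?f "{..card V}"] by fastforce
  then obtain a b where ab: "a \<noteq> b" "?f a = ?f b"
    unfolding inj_on_def by blast
  then obtain a b where ab: "a < b" "?f a = ?f b"
    by (metis linorder_neqE_nat)
  have "(s^^(b-a)) ((s^^a) v) = (s^^b) v"
    using ab(1) by (metis comp_apply funpow_add le_add_diff_inverse2 less_imp_le)
  moreover have "(s^^i) ((s^^a) v) \<in> V - {r}" for i
    using assms(2) unfolding NR_def by (metis comp_apply funpow_add)
  ultimately have "on_cycle V r s ((s^^a) v)" unfolding on_cycle_def
    using ab by (intro exI[of _ "b-a"]) auto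
  then show ?thesis by blast
qed

lemma path_switch:
  assumes "E\<^sup>*\<^sup>* a b" "P a" "\<not> P b"
  shows "\<exists>x y. E x y \<and> P x \<and> \<not> P y"
  using assms by (induction rule: rtranclp_induct) auto

lemma RR_back:
  assumes "RR V r t ((t^^j) v)" "\<forall>i<j. (t^^i) v \<in> V - {r}"
  shows "RR V r t v"
proof -
  obtain j' where j': "(t^^j') ((t^^j) v) = r" "\<forall>i<j'. (t^^i) ((t^^j) v) \<in> V - {r}"
    using assms(1) unfolding RR_def by blast
  have "(t^^(j'+j)) v = r" using j' by (simp add: funpow_add)
  moreover have "(t^^i) v \<in> V - {r}" if "i < j'+j" for i
  proof (cases "i < j")
    case True then show ?thesis using assms(2) by blast
  next
    case False
    then have "i = (i-j) + j" "i - j < j'" using that by auto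
    then show ?thesis using j'(2) by (metis comp_apply funpow_add)
  qed
  ultimately show ?thesis unfolding RR_def by blast
qed



definition Nx :: "('a \<Rightarrow> 'a) \<Rightarrow> 'a \<Rightarrow> nat" where
  "Nx s x = (LEAST n. (s^^n) x \<in> (\<lambda>j. (s^^j) x) ` {..<n})"
definition Ox :: "('a \<Rightarrow> 'a) \<Rightarrow> 'a \<Rightarrow> 'a set" where
  "Ox s x = (\<lambda>j. (s^^j) x) ` {..<Nx s x}"
definition posx :: "('a \<Rightarrow> 'a) \<Rightarrow> 'a \<Rightarrow> 'a \<Rightarrow> nat" where
  "posx s x z = (THE j. j < Nx s x \<and> (s^^j) x = z)"
definition tt :: "('a \<Rightarrow> 'a) \<Rightarrow> 'a \<Rightarrow> 'a \<Rightarrow> 'a \<Rightarrow> 'a" where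
  "tt s x y z = (if z = x then y else if z \<in> Ox s x then (s^^(posx s x z - 1)) x else s z)"
definition ex :: "('a \<Rightarrow> 'a) \<Rightarrow> 'a \<Rightarrow> 'a" where
  "ex s x = (s^^(Nx s x - 1)) x"

context
  fixes V :: "'a set" and E and r :: 'a and s x y
  assumes G: "simple_graph V E" and rV: "r \<in> V" and sA: "s \<in> assignments V E r"
    and uc: "card (dir_cycles V r s) = 1"
    and Exy: "E x y" and NRx: "NR V r s x" and RRy: "RR V r s y"
begin

abbreviation "q j \<equiv> (s^^j) x"
abbreviation "N \<equiv> Nx s x"
abbreviation "Ob \<equiv> Ox s x"
abbreviation "t \<equiv> tt s x y"
abbreviation "e \<equiv> ex s x"

lemma finV: "finite V" using G unfolding simple_graph_def by blast

lemma q_in: "q j \<in> V - {r}" using NRx unfolding NR_def by blast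

lemma N_ex: "\<exists>n. q n \<in> q ` {..<n}"
proof -
  have "q ` {..card V} \<subseteq> V" using q_in by blast
  then have "\<not> inj_on q {..card V}"
    using card_inj_on_le[OF _ _ finV, of q "{..card V}"] by fastforce
  then obtain a b where ab: "a \<noteq> b" "q a = q b"
    unfolding inj_on_def by blast
  then obtain a b where ab: "a < b" "q a = q b"
    by (metis linorder_neqE_nat)
  then have "q b \<in> q ` {..<b}" by (intro image_eqI[of _ _ a]) auto
  then show ?thesis by blast
qed

lemma N_prop: "q N \<in> q ` {..<N}"
  unfolding Nx_def by (rule LeastI_ex[OF N_ex])

lemma N_pos: "N > 0"
  using N_prop by (cases "N") auto

lemma q_distinct: "i < N \<Longrightarrow> j < N \<Longrightarrow> q i = q j \<Longrightarrow> i = j"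
proof (rule ccontr)
  assume a: "i < N" "j < N" "q i = q j" "i \<noteq> j"
  then obtain a b where "a < b" "b < N" "q a = q b"
    by (metis linorder_neqE_nat)
  then have "q b \<in> q ` {..<b}" by (intro image_eqI[of _ _ a]) auto
  then have "N \<le> b" unfolding Nx_def by (rule Least_le)
  then show False using \<open>b < N\<close> by simp
qed

lemma k_ex: "\<exists>k<N. q N = q k" using N_prop by auto

lemma q_O: "q m \<in> Ob"
proof (induction m)
  case 0 then show ?case using N_pos unfolding Ox_def by (intro image_eqI[of _ _ 0]) auto
next
  case (Suc m)
  then obtain j where j: "j < N" "q m = q j" unfolding Ox_def by auto
  have "q (Suc m) = s (q m)" by simp
  also have "\<dots> = q (Suc j)" using j by simp
  finally have *: "q (Suc m) = q (Suc j)" .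
  show ?case
  proof (cases "Suc j < N")
    case True then show ?thesis using * unfolding Ox_def by (intro image_eqI[of _ _ "Suc j"]) auto
  next
    case False then have "Suc j = N" using j by simp
    then obtain k where "k < N" "q (Suc j) = q k" using * k_ex by auto
    then show ?thesis using * unfolding Ox_def by (intro image_eqI[of _ _ k]) auto
  qed
qed

lemma O_sub: "Ob \<subseteq> V - {r}" using q_in unfolding Ox_def by blast

lemma O_iter: "z \<in> Ob \<Longrightarrow> (s^^i) z \<in> Ob"
proof -
  assume "z \<in> Ob"
  then obtain j where "z = q j" unfolding Ox_def by auto
  moreover have "(s^^i) (q j) = q (i+j)" by (simp add: funpow_add)
  ultimately show ?thesis using q_O by simp
qed

lemma pos_q: "j < N \<Longrightarrow> posx s x (q j) = j"
  unfolding posx_def using q_distinct by (intro the_equality) auto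

lemma O_cases: "z \<in> Ob \<Longrightarrow> \<exists>j<N. z = q j" unfolding Ox_def by auto

lemma x_O: "x \<in> Ob" using q_O[of 0] by simp

lemma y_notO: "y \<notin> Ob"
proof
  assume "y \<in> Ob"
  obtain j where "(s^^j) y = r" using RRy unfolding RR_def by blast
  moreover have "(s^^j) y \<in> Ob" using O_iter[OF \<open>y \<in> Ob\<close>] .
  ultimately show False using O_sub by blast
qed

lemma t_q: "j < N \<Longrightarrow> t (q j) = (if j = 0 then y else q (j - 1))"
proof -
  assume j: "j < N"
  have "q j = x \<longleftrightarrow> j = 0" using q_distinct[OF j N_pos] by auto
  then show ?thesis unfolding tt_def using pos_q[OF j] q_O[of j] by auto
qed

lemma t_out: "z \<notin> Ob \<Longrightarrow> t z = s z"
  unfolding tt_def using x_O by auto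

lemma t_iter_e: "i \<le> N - 1 \<Longrightarrow> (t^^i) e = q (N - 1 - i)"
proof (induction i)
  case 0 then show ?case unfolding ex_def by simp
next
  case (Suc i)
  then have "(t^^Suc i) e = t (q (N - 1 - i))" by simp
  also have "\<dots> = q (N - 1 - Suc i)"
  proof -
    define m where "m = N - 1 - Suc i"
    have a: "N - 1 - i = Suc m" using Suc.prems unfolding m_def by arith
    have "Suc m < N" using N_pos a by arith
    then have "t (q (Suc m)) = q m" using t_q by (metis diff_Suc_1 nat.distinct(1))
    then show ?thesis using a unfolding m_def by metis
  qed
  finally show ?case .
qed

lemma e_O: "e \<in> Ob" unfolding ex_def using q_O .

lemma se: "s e = q N"
proof -
  have "s e = q (Suc (N - 1))" unfolding ex_def by simp
  then show ?thesis using N_pos by simp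
qed

lemma E_e: "E e (s e)"
  using assign_E[OF sA] e_O O_sub by blast

lemma se_ne: "s e \<noteq> e"
  using E_e G unfolding simple_graph_def by metis


lemma k_facts: obtains k where "k < N - 1" "s e = q k"
proof -
  obtain k where k: "k < N" "q N = q k" using k_ex by blast
  have "k \<noteq> N - 1" using se_ne se k unfolding ex_def by auto
  then show ?thesis using k se by (intro that[of k]) auto
qed

lemma E5: "\<exists>a>0. (t^^a) e = s e \<and> (\<forall>i<a. (t^^i) e \<in> V - {r})"
proof -
  obtain k where k: "k < N - 1" "s e = q k" using k_facts by blast
  have "(t^^(N-1-k)) e = s e" using k t_iter_e[of "N-1-k"] by auto
  moreover have "(t^^i) e \<in> V - {r}" if "i < N-1-k" for i
    using t_iter_e[of i] that q_in by auto
  ultimately show ?thesis using k by (intro exI[of _ "N-1-k"]) auto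
qed

lemma E3a: "z \<in> Ob \<Longrightarrow> z \<noteq> e \<Longrightarrow> s z \<in> Ob \<and> t (s z) = z"
proof -
  assume z: "z \<in> Ob" "z \<noteq> e"
  then obtain j where j: "j < N" "z = q j" using O_cases by blast
  then have "j \<noteq> N - 1" using z unfolding ex_def by auto
  then have sj: "Suc j < N" using j by auto
  have "s z = q (Suc j)" using j by simp
  then show ?thesis using t_q[OF sj] q_O[of "Suc j"] j by simp
qed

lemma E3b: "z \<in> Ob \<Longrightarrow> z \<noteq> e \<Longrightarrow> w \<in> Ob \<Longrightarrow> t w = z \<Longrightarrow> w = s z"
proof -
  assume z: "z \<in> Ob" "z \<noteq> e" and w: "w \<in> Ob" "t w = z"
  then obtain j where j: "j < N" "z = q j" using O_cases by blast
  obtain i where i: "i < N" "w = q i" using w O_cases by blast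
  show ?thesis
  proof (cases "i = 0")
    case True
    then have "t w = y" using t_q[OF i(1)] i by simp
    then show ?thesis using y_notO w z by simp
  next
    case False
    then have "q (i - 1) = q j" using t_q[OF i(1)] i w j by simp
    then have "i - 1 = j" using q_distinct i j by simp
    then have "i = Suc j" using False by simp
    then show ?thesis using i j by simp
  qed
qed

lemma E4: "Ob = {(t^^i) e | i. \<forall>j<i. (t^^j) e \<noteq> x}"
proof
  show "Ob \<subseteq> {(t^^i) e | i. \<forall>j<i. (t^^j) e \<noteq> x}"
  proof
    fix z assume "z \<in> Ob"
    then obtain j where j: "j < N" "z = q j" using O_cases by blast
    have "z = (t^^(N-1-j)) e" using t_iter_e[of "N-1-j"] j by simp
    moreover have "(t^^l) e \<noteq> x" if "l < N-1-j" for l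
    proof
      assume "(t^^l) e = x"
      then have "q (N-1-l) = q 0" using t_iter_e[of l] that by simp
      then have "N-1-l = 0" using q_distinct[of "N-1-l" 0] N_pos by simp
      then show False using that by simp
    qed
    ultimately show "z \<in> {(t^^i) e | i. \<forall>j<i. (t^^j) e \<noteq> x}" by blast
  qed
next
  show "{(t^^i) e | i. \<forall>j<i. (t^^j) e \<noteq> x} \<subseteq> Ob"
  proof
    fix z assume "z \<in> {(t^^i) e | i. \<forall>j<i. (t^^j) e \<noteq> x}"
    then obtain i where i: "z = (t^^i) e" "\<forall>j<i. (t^^j) e \<noteq> x" by blast
    have "i \<le> N - 1"
    proof (rule ccontr)
      assume "\<not> i \<le> N - 1"
      then have "(t^^(N-1)) e \<noteq> x" using i by simp
      then show False using t_iter_e[of "N-1"] by simp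
    qed
    then show "z \<in> Ob" using i t_iter_e q_O by simp
  qed
qed

lemma cyc_in_O: "on_cycle V r s w \<Longrightarrow> w \<in> Ob"
proof -
  assume w: "on_cycle V r s w"
  obtain k where k: "k < N" "q N = q k" using k_ex by blast
  have "(s^^(N-k)) (q k) = (s^^(N-k+k)) x" by (simp add: funpow_add)
  then have "(s^^(N-k)) (q k) = q k" using k by simp
  moreover have "(s^^i) (q k) \<in> V - {r}" for i
    using q_in[of "i+k"] by (simp add: funpow_add)
  ultimately have ck: "on_cycle V r s (q k)" unfolding on_cycle_def using k
    by (intro exI[of _ "N-k"]) auto
  have "{(s ^^ i) w | i. True} \<in> dir_cycles V r s" "{(s ^^ i) (q k) | i. True} \<in> dir_cycles V r s"
    unfolding dir_cycles_def using w ck by blast+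
  moreover obtain D where "dir_cycles V r s = {D}" using uc card_1_singletonE by blast
  ultimately have "{(s ^^ i) w | i. True} = {(s ^^ i) (q k) | i. True}" by simp
  moreover have "w \<in> {(s ^^ i) w | i. True}" by (metis (mono_tags) funpow_0 mem_Collect_eq)
  ultimately obtain i where "w = (s^^i) (q k)" by auto
  then show ?thesis using O_iter q_O by simp
qed

lemma t_assign: "t \<in> assignments V E r"
  unfolding assignments_def
proof (rule PiE_I)
  fix z assume z: "z \<in> V - {r}"
  show "t z \<in> {u. E z u}"
  proof (cases "z \<in> Ob")
    case True
    then obtain j where j: "j < N" "z = q j" using O_cases by blast
    show ?thesis
    proof (cases "j = 0")
      case True then show ?thesis using t_q[OF j(1)] j Exy by simp
    next
      case False
      then have "E (q (j-1)) (s (q (j-1)))" using assign_E[OF sA] q_in by blast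
      moreover have "s (q (j-1)) = q j" using False by (metis Suc_pred' bot_nat_0.not_eq_extremum comp_apply funpow.simps(2))
      ultimately have "E (q j) (q (j-1))" using G unfolding simple_graph_def by metis
      then show ?thesis using t_q[OF j(1)] j False by simp
    qed
  next
    case False
    then show ?thesis using t_out assign_E[OF sA] z by auto
  qed
next
  fix z assume z: "z \<notin> V - {r}"
  then have "z \<notin> Ob" using O_sub by blast
  then show "t z = undefined" using t_out assign_out[OF sA z] by simp
qed

lemma t_follow: "(\<forall>i<j. (s^^i) v \<notin> Ob) \<Longrightarrow> (t^^j) v = (s^^j) v"
proof (induction j)
  case 0 then show ?case by simp
next
  case (Suc j)
  then have "(t^^j) v = (s^^j) v" "(s^^j) v \<notin> Ob" by auto
  then show ?case using t_out by simp
qed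

lemma RR_t_y: "RR V r t y"
proof -
  obtain j where j: "(s^^j) y = r" "\<forall>i<j. (s^^i) y \<in> V - {r}" using RRy unfolding RR_def by blast
  have nO: "(s^^i) y \<notin> Ob" if "i \<le> j" for i
  proof
    assume "(s^^i) y \<in> Ob"
    then have "(s^^(j-i)) ((s^^i) y) \<in> Ob" by (rule O_iter)
    moreover have "(s^^(j-i)) ((s^^i) y) = (s^^(j-i+i)) y" by (simp add: funpow_add)
    ultimately have "(s^^j) y \<in> Ob" using that by simp
    then show False using j O_sub by auto
  qed
  have "(t^^i) y = (s^^i) y" if "i \<le> j" for i using t_follow nO that by simp
  then show ?thesis unfolding RR_def using j by (intro exI[of _ j]) auto
qed

lemma RR_t_O: "j < N \<Longrightarrow> RR V r t (q j)"
proof (induction j)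
  case 0
  have "RR V r t ((t^^1) x)" using RR_t_y t_q[of 0] N_pos by simp
  then show ?case using RR_back[of V r t 1 x] q_in[of 0] by simp
next
  case (Suc j)
  then have "RR V r t ((t^^1) (q (Suc j)))" using t_q[OF Suc.prems] by simp
  then show ?case using RR_back[of V r t 1 "q (Suc j)"] q_in[of "Suc j"] by simp
qed

lemma RR_t_all: "v \<in> V \<Longrightarrow> RR V r t v"
proof -
  assume v: "v \<in> V"
  have "\<exists>j. (s^^j) v \<in> Ob \<union> {r}"
  proof (cases "NR V r s v")
    case True
    then obtain a where "on_cycle V r s ((s^^a) v)" using pigeon_cycle[OF G] by blast
    then show ?thesis using cyc_in_O by blast
  next
    case False
    then have "RR V r s v" using dichotomy[OF sA G v] by blast
    then show ?thesis unfolding RR_def by blast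
  qed
  then obtain j where j: "(s^^j) v \<in> Ob \<union> {r}" "\<forall>i<j. (s^^i) v \<notin> Ob \<union> {r}"
    using exists_least_iff[of "\<lambda>j. (s^^j) v \<in> Ob \<union> {r}"] by blast
  have inV: "(s^^i) v \<in> V" if "i < j" for i
    using funpow_in_V[OF sA G v] j(2) that by auto
  have tj: "(t^^i) v = (s^^i) v" if "i \<le> j" for i using t_follow j(2) that by simp
  have "RR V r t ((t^^j) v)"
  proof (cases "(s^^j) v = r")
    case True then show ?thesis using tj unfolding RR_def by (intro exI[of _ 0]) auto
  next
    case False
    then obtain l where "l < N" "(s^^j) v = q l" using j(1) O_cases by blast
    then show ?thesis using tj RR_t_O by simp
  qed
  moreover have "\<forall>i<j. (t^^i) v \<in> V - {r}" using tj inV j(2) by auto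
  ultimately show ?thesis by (rule RR_back)
qed

lemma t_tree: "card (dir_cycles V r t) = 0"
proof -
  have "\<not> on_cycle V r t v" for v
  proof
    assume c: "on_cycle V r t v"
    then have "v \<in> V" unfolding on_cycle_def by (metis Diff_iff funpow_0)
    then show False using RR_not_cycle[OF RR_t_all c] by blast
  qed
  then have "dir_cycles V r t = {}" unfolding dir_cycles_def by blast
  then show ?thesis by simp
qed

end


definition xy :: "'a set \<Rightarrow> ('a \<Rightarrow> 'a \<Rightarrow> bool) \<Rightarrow> 'a \<Rightarrow> ('a \<Rightarrow> 'a) \<Rightarrow> 'a \<times> 'a" where
  "xy V E r s = (SOME p. E (fst p) (snd p) \<and> NR V r s (fst p) \<and> RR V r s (snd p))"

definition enc where
  "enc V E r s = (let x = fst (xy V E r s); y = snd (xy V E r s) in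
     (tt s x y, x, {ex s x, s (ex s x)}))"

lemma xy_prop:
  assumes G: "simple_graph V E" and C: "connected_graph V E" and rV: "r \<in> V"
    and sA: "s \<in> assignments V E r" and uc: "card (dir_cycles V r s) = 1"
  shows "E (fst (xy V E r s)) (snd (xy V E r s)) \<and> NR V r s (fst (xy V E r s)) \<and> RR V r s (snd (xy V E r s))"
proof -
  have "dir_cycles V r s \<noteq> {}" using uc by auto
  then obtain v where v: "on_cycle V r s v" unfolding dir_cycles_def by blast
  then obtain k where k: "k>0" "(s^^k) v = v" "\<forall>i<k. (s^^i) v \<in> V - {r}"
    unfolding on_cycle_def by blast
  have nv: "NR V r s v" unfolding NR_def using periodic[OF k(2,1) k(3)] by blast
  then have vV: "v \<in> V" unfolding NR_def by (metis Diff_iff funpow_0)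
  have "E\<^sup>*\<^sup>* v r" using C vV rV unfolding connected_graph_def by blast
  moreover have "\<not> NR V r s r" unfolding NR_def by (metis Diff_iff funpow_0 singletonI)
  ultimately obtain a b where ab: "E a b" "NR V r s a" "\<not> NR V r s b"
    using path_switch[of E v r "NR V r s"] nv by blast
  have "b \<in> V" using ab(1) G unfolding simple_graph_def by blast
  then have "RR V r s b" using dichotomy[OF sA G] ab(3) by blast
  then have "\<exists>p. E (fst p) (snd p) \<and> NR V r s (fst p) \<and> RR V r s (snd p)"
    using ab by (intro exI[of _ "(a,b)"]) auto
  then show ?thesis unfolding xy_def by (rule someI_ex)
qed

lemma enc_inj:
  assumes G: "simple_graph V E" and C: "connected_graph V E" and rV: "r \<in> V"
  shows "inj_on (enc V E r) {s \<in> assignments V E r. card (dir_cycles V r s) = 1}"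
proof (rule inj_onI)
  fix s1 s2
  assume s1: "s1 \<in> {s \<in> assignments V E r. card (dir_cycles V r s) = 1}"
    and s2: "s2 \<in> {s \<in> assignments V E r. card (dir_cycles V r s) = 1}"
    and eq: "enc V E r s1 = enc V E r s2"
  define x where "x = fst (xy V E r s1)"
  define y where "y = snd (xy V E r s1)"
  define x2 where "x2 = fst (xy V E r s2)"
  define y2 where "y2 = snd (xy V E r s2)"
  have p1: "E x y" "NR V r s1 x" "RR V r s1 y"
    using xy_prop[OF G C rV] s1 unfolding x_def y_def by auto
  have p2: "E x2 y2" "NR V r s2 x2" "RR V r s2 y2"
    using xy_prop[OF G C rV] s2 unfolding x2_def y2_def by auto
  have "tt s1 x y = tt s2 x2 y2 \<and> x = x2 \<and> {ex s1 x, s1 (ex s1 x)} = {ex s2 x2, s2 (ex s2 x2)}"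
    using eq unfolding enc_def x_def y_def x2_def y2_def Let_def prod.inject .
  note eq' = this[THEN conjunct1] this[THEN conjunct2, THEN conjunct1] this[THEN conjunct2, THEN conjunct2]
  have "y = y2" using fun_cong[OF eq'(1), of x] eq'(2) unfolding tt_def by simp
  then have p2: "E x y" "NR V r s2 x" "RR V r s2 y" using p2 eq'(2) by auto
  define t where "t = tt s1 x y"
  have t2: "t = tt s2 x y" using eq' \<open>y = y2\<close> unfolding t_def by simp
  have A1: "s1 \<in> assignments V E r \<and> card (dir_cycles V r s1) = 1" using s1 by blast
  have A2: "s2 \<in> assignments V E r \<and> card (dir_cycles V r s2) = 1" using s2 by blast
  note L1 = E5[OF G rV A1[THEN conjunct1] A1[THEN conjunct2] p1]
       E4[OF G rV A1[THEN conjunct1] A1[THEN conjunct2] p1]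
       E3b[OF G rV A1[THEN conjunct1] A1[THEN conjunct2] p1]
       RR_t_all[OF G rV A1[THEN conjunct1] A1[THEN conjunct2] p1]
       e_O[OF G rV A1[THEN conjunct1] A1[THEN conjunct2] p1]
       O_sub[OF G rV A1[THEN conjunct1] A1[THEN conjunct2] p1]
       se_ne[OF G rV A1[THEN conjunct1] A1[THEN conjunct2] p1]
       t_out[OF G rV A1[THEN conjunct1] A1[THEN conjunct2] p1]
  note L2 = E5[OF G rV A2[THEN conjunct1] A2[THEN conjunct2] p2]
       E4[OF G rV A2[THEN conjunct1] A2[THEN conjunct2] p2]
       E3a[OF G rV A2[THEN conjunct1] A2[THEN conjunct2] p2]
       se_ne[OF G rV A2[THEN conjunct1] A2[THEN conjunct2] p2]
       t_out[OF G rV A2[THEN conjunct1] A2[THEN conjunct2] p2]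
  define e where "e = ex s1 x"
  have ee: "ex s2 x = e"
  proof (rule ccontr)
    assume ne: "ex s2 x \<noteq> e"
    then have c: "s2 (ex s2 x) = e" "s1 e = ex s2 x"
      using eq'(3) eq'(2) unfolding e_def by (auto simp: doubleton_eq_iff)
    obtain a where a: "a>0" "(t^^a) e = s1 e" "\<forall>i<a. (t^^i) e \<in> V - {r}"
      using L1(1) unfolding t_def e_def by blast
    obtain b where b: "b>0" "(t^^b) (ex s2 x) = s2 (ex s2 x)" "\<forall>i<b. (t^^i) (ex s2 x) \<in> V - {r}"
      using L2(1) unfolding t2 by blast
    have "on_cycle V r t e" unfolding on_cycle_def
    proof (intro exI[of _ "b+a"] conjI allI impI)
      show "0 < b + a" using a by simp
      show "(t^^(b+a)) e = e" using a b c by (simp add: funpow_add)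
      fix i assume i: "i < b + a"
      show "(t^^i) e \<in> V - {r}"
      proof (cases "i < a")
        case True then show ?thesis using a by blast
      next
        case False
        then have "i = (i - a) + a" "i - a < b" using i by auto
        then show ?thesis using b(3) a(2) c by (metis comp_apply funpow_add)
      qed
    qed
    moreover have "RR V r t e" using L1(4) L1(5) L1(6) unfolding t_def e_def by blast
    ultimately show False by (metis RR_not_cycle)
  qed
  have OO: "Ox s1 x = Ox s2 x" using L1(2) L2(2) ee t2 unfolding t_def e_def by simp
  have se: "s1 e = s2 e"
    using eq'(3) eq'(2) ee L1(7) L2(4) unfolding e_def by (auto simp: doubleton_eq_iff)
  show "s1 = s2"
  proof
    fix z
    show "s1 z = s2 z"
    proof (cases "z \<in> Ox s1 x")
      case True
      show ?thesis
      proof (cases "z = e")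
        case True then show ?thesis using se by simp
      next
        case False
        have "s2 z \<in> Ox s2 x \<and> tt s2 x y (s2 z) = z" using L2(3) True OO False ee by simp
        then show ?thesis using L1(3)[of z "s2 z"] True False OO t2 unfolding t_def e_def by simp
      qed
    next
      case False
      then show ?thesis using L1(8) L2(5) OO t2 unfolding t_def by metis
    qed
  qed
qed


lemma enc_into:
  assumes G: "simple_graph V E" and C: "connected_graph V E" and rV: "r \<in> V"
    and sA: "s \<in> assignments V E r" and uc: "card (dir_cycles V r s) = 1"
  shows "enc V E r s \<in> {s \<in> assignments V E r. card (dir_cycles V r s) = 0}
     \<times> ((V - {r}) \<times> {{u, v} | u v. E u v})"
proof -
  define x where "x = fst (xy V E r s)"
  define y where "y = snd (xy V E r s)"
  have p: "E x y" "NR V r s x" "RR V r s y"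
    using xy_prop[OF G C rV sA uc] unfolding x_def y_def by auto
  have "x \<in> V - {r}" using p(2) unfolding NR_def by (metis funpow_0)
  moreover have "{ex s x, s (ex s x)} \<in> {{u, v} | u v. E u v}"
    using E_e[OF G rV sA uc p] by blast
  ultimately show ?thesis unfolding enc_def Let_def x_def[symmetric] y_def[symmetric]
    using t_assign[OF G rV sA uc p] t_tree[OF G rV sA uc p] by simp
qed

theorem theorem18:
  fixes V :: "'a set" and E :: "'a \<Rightarrow> 'a \<Rightarrow> bool" and r :: 'a
  assumes "simple_graph V E" and "connected_graph V E" and "r \<in> V"
  shows "real (Z_tree V E r 1) / real (Z_tree V E r 0) \<le> real (num_edges V E) * real (card V)"
proof -
  note G = assms(1) and C = assms(2) and rV = assms(3)
  have finV: "finite V" using G unfolding simple_graph_def by blast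
  let ?Z1 = "{s \<in> assignments V E r. card (dir_cycles V r s) = 1}"
  let ?Z0 = "{s \<in> assignments V E r. card (dir_cycles V r s) = 0}"
  let ?Ed = "{{u, v} | u v. E u v}"
  have finA: "finite (assignments V E r)" unfolding assignments_def
  proof (rule finite_PiE)
    show "finite (V - {r})" using finV by simp
    fix v show "finite {u. E v u}"
      using G finV unfolding simple_graph_def by (metis (no_types, lifting) mem_Collect_eq rev_finite_subset subsetI)
  qed
  have finEd: "finite ?Ed"
  proof (rule finite_subset[of _ "Pow V"])
    show "?Ed \<subseteq> Pow V" using G unfolding simple_graph_def by auto
  qed (use finV in simp)
  have "card ?Z1 \<le> card (?Z0 \<times> ((V - {r}) \<times> ?Ed))"
    using card_inj_on_le[OF enc_inj[OF G C rV], of "?Z0 \<times> ((V - {r}) \<times> ?Ed)"]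
      enc_into[OF G C rV] finA finEd finV by auto
  also have "\<dots> = card ?Z0 * (card (V - {r}) * card ?Ed)" by (simp add: card_cartesian_product)
  also have "\<dots> \<le> card ?Z0 * (card V * card ?Ed)"
    using finV by (intro mult_le_mono2 mult_le_mono1) (simp add: card_mono)
  finally have le: "Z_tree V E r 1 \<le> Z_tree V E r 0 * (num_edges V E * card V)"
    unfolding Z_tree_def num_edges_def by (simp add: mult.commute)
  show ?thesis
  proof (cases "Z_tree V E r 0 = 0")
    case True then show ?thesis by simp
  next
    case False
    have "real (Z_tree V E r 1) \<le> real (Z_tree V E r 0) * (real (num_edges V E) * real (card V))"
      using le by (metis of_nat_le_iff of_nat_mult)
    then show ?thesis using False by (simp add: divide_le_eq mult.commute)
  qed
qed

end
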